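(* Let $C$ be the constant of Assumption 2, let $T\ge 320^{5/4}C^5$, and set the tuning parameter of the two-stage adaptive Neyman allocation algorithm (described in the context) to $\beta=4C^2(\log T)^{1/2}$. Then the algorithm is feasible under $\beta$ (i.e. $\beta\sqrt T\le T$). Furthermore, letting $(T(1),T(0))$ be the total numbers of treated and control subjects assigned by the algorithm, under Assumption 2, $$\sup_{\sigma(1),\sigma(0)}\frac{\mathrm E[V(T(1),T(0))]}{V(T^*(1),T^*(0))}<1+5C^2T^{-1/2}(\log T)^{1/2}.$$
   Context: Setup. There are $T$ subjects and two treatments, $1$ (treatment) and $0$ (control). Subject $t$ has potential outcomes $(Y_t(1),Y_t(0))$, i.i.d. copies of a pair $(Y(1),Y(0))$ with arbitrary joint distribution; $\sigma(1),\sigma(0)>0$ are the standard deviations of $Y(1),Y(0)$. In stage $m$ a completely randomized experiment on fresh subjects is run with exactly $T_m(1)$ treated and $T_m(0)$ control; a subject assigned $w$ reveals $Y_t(w)$. Integrality of sizes is ignored. $T(w)=\sum_mT_m(w)$, $T(1)+T(0)=T$. Proxy mean squared error $V(T(1),T(0))=\sigma^2(1)/T(1)+\sigma^2(0)/T(0)$; $V(T^*(1),T^*(0))=(\sigma(1)+\sigma(0))^2/T$ is its value at the Neyman allocation $T^*(w)=\frac{\sigma(w)}{\sigma(1)+\sigma(0)}T$. $\widehat\sigma_1^2(w)$ is the unbiased sample variance (denominator $n-1$) of the observed outcomes of the stage-1 subjects assigned $w$, $\widehat\sigma_1(w)$ its nonnegative root; convention $\frac0{0+0}=\frac12$. $\log$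 is the natural logarithm. Two-stage adaptive Neyman allocation with parameter $\beta$: Stage 1 uses $(\frac\beta2\sqrt T,\frac\beta2\sqrt T)$. Compute $a=\frac{\widehat\sigma_1(1)}{\widehat\sigma_1(1)+\widehat\sigma_1(0)}T$, $b=\frac{\widehat\sigma_1(0)}{\widehat\sigma_1(1)+\widehat\sigma_1(0)}T$. If $a>\frac\beta2\sqrt T$ and $b>\frac\beta2\sqrt T$, stage 2 uses $(a-\frac\beta2\sqrt T,\ b-\frac\beta2\sqrt T)$. Otherwise, if $a\le\frac\beta2\sqrt T$, stage 2 uses $(0,T-\beta\sqrt T)$; if $b\le\frac\beta2\sqrt T$, stage 2 uses $(T-\beta\sqrt T,0)$. Assumption 2: there is a constant $C<\infty$, not depending on $T$, such that $|Y(1)|\le C\sigma(1)$ and $|Y(0)|\le C\sigma(0)$ almost surely. *)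

theory Defs
  imports "HOL-Probability.Probability"
begin

definition sd :: "'a measure \<Rightarrow> ('a \<Rightarrow> real) \<Rightarrow> real" where
  "sd Q f = sqrt (\<integral>x. (f x - (\<integral>y. f y \<partial>Q))\<^sup>2 \<partial>Q)"

definition sample_var :: "'a set \<Rightarrow> ('a \<Rightarrow> real) \<Rightarrow> real" where
  "sample_var I f =
     (\<Sum>i\<in>I. (f i - (\<Sum>j\<in>I. f j) / real (card I))\<^sup>2) / (real (card I) - 1)"

definition share :: "real \<Rightarrow> real \<Rightarrow> real" where
  "share x y = (if x + y = 0 then 1/2 else x / (x + y))"

definition proxy_mse :: "real \<Rightarrow> real \<Rightarrow> real \<Rightarrow> real \<Rightarrow> real" where
  "proxy_mse s1 s0 t1 t0 = s1\<^sup>2 / t1 + s0\<^sup>2 / t0"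

text \<open>Total allocation (T(1),T(0)) = stage-1 sizes + stage-2 sizes of the two-stage
  algorithm with parameter beta, given the stage-1 estimates s1, s0.\<close>
definition two_stage_alloc :: "real \<Rightarrow> real \<Rightarrow> real \<Rightarrow> real \<Rightarrow> real \<times> real" where
  "two_stage_alloc T \<beta> s1 s0 =
    (let h = \<beta> / 2 * sqrt T; a = share s1 s0 * T; b = share s0 s1 * T in
     if a > h \<and> b > h then (h + (a - h), h + (b - h))
     else if a \<le> h then (h + 0, h + (T - \<beta> * sqrt T))
     else (h + (T - \<beta> * sqrt T), h + 0))"

text \<open>Stage-1 experiment: 2n fresh subjects with i.i.d. potential outcomes drawn from the joint
  law Q of (Y(1),Y(0)), and an independent uniformly random treated set S of exactly n
  subjects (completely randomized design).\<close>
definition stage1_space :: "nat \<Rightarrow> (real \<times> real) measure \<Rightarrow> (nat set \<times> (nat \<Rightarrow> real \<times> real)) measure" where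
  "stage1_space n Q =
     measure_pmf (pmf_of_set {S. S \<subseteq> {..<2*n} \<and> card S = n})
       \<Otimes>\<^sub>M PiM {..<2*n} (\<lambda>_. Q)"

definition hat_sd1 :: "nat set \<times> (nat \<Rightarrow> real \<times> real) \<Rightarrow> real" where
  "hat_sd1 \<omega> = sqrt (sample_var (fst \<omega>) (\<lambda>t. fst (snd \<omega> t)))"

definition hat_sd0 :: "nat \<Rightarrow> nat set \<times> (nat \<Rightarrow> real \<times> real) \<Rightarrow> real" where
  "hat_sd0 n \<omega> = sqrt (sample_var ({..<2*n} - fst \<omega>) (\<lambda>t. snd (snd \<omega> t)))"

definition expected_V :: "real \<Rightarrow> real \<Rightarrow> nat \<Rightarrow> (real \<times> real) measure \<Rightarrow> real" where
  "expected_V T \<beta> n Q =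
     (\<integral>\<omega>. (case two_stage_alloc T \<beta> (hat_sd1 \<omega>) (hat_sd0 n \<omega>) of
              (t1, t0) \<Rightarrow> proxy_mse (sd Q fst) (sd Q snd) t1 t0) \<partial>stage1_space n Q)"

definition admissible :: "real \<Rightarrow> (real \<times> real) measure \<Rightarrow> bool" where
  "admissible C Q \<longleftrightarrow> prob_space Q \<and> sets Q = sets borel \<and>
     sd Q fst > 0 \<and> sd Q snd > 0 \<and>
     (AE x in Q. \<bar>fst x\<bar> \<le> C * sd Q fst \<and> \<bar>snd x\<bar> \<le> C * sd Q snd)"

end

theory Submission
  imports Defs
begin

lemma key_zz:
  fixes x y k d :: real
  assumes x: "x > 0" and y: "y > 0" and k: "k > 0" and d: "0 \<le> d" "d\<^sup>2 \<le> 3/5"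
    and px: "k*(1-d) \<le> x\<^sup>2" "x\<^sup>2 \<le> k*(1+d)"
    and py: "k*(1-d) \<le> y\<^sup>2" "y\<^sup>2 \<le> k*(1+d)"
  shows "(x - y)\<^sup>2 / (x*y) \<le> 2 * d\<^sup>2"
proof -
  define p where "p = x\<^sup>2"
  define q where "q = y\<^sup>2"
  have pq: "p > 0" "q > 0" using x y by (auto simp: p_def q_def)
  have d1: "d \<le> 1" using d abs_square_less_1[of d] by auto
  have "p*(1-d) \<le> q*(1+d)"
  proof -
    have "p*(1-d) \<le> k*(1+d)*(1-d)" using px d d1 by (auto simp: p_def intro: mult_right_mono)
    also have "\<dots> \<le> q*(1+d)" using py d by (simp add: q_def mult.commute mult.left_commute mult_left_mono)
    finally show ?thesis .
  qed
  moreover have "q*(1-d) \<le> p*(1+d)"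
  proof -
    have "q*(1-d) \<le> k*(1+d)*(1-d)" using py d d1 by (auto simp: q_def intro: mult_right_mono)
    also have "\<dots> \<le> p*(1+d)" using px d by (simp add: p_def mult.commute mult.left_commute mult_left_mono)
    finally show ?thesis .
  qed
  ultimately have "\<bar>p - q\<bar> \<le> d*(p+q)" by (auto simp: algebra_simps abs_if)
  hence "(p-q)\<^sup>2 \<le> (d*(p+q))\<^sup>2" using pq d by (metis abs_le_square_iff abs_of_nonneg add_pos_pos mult_nonneg_nonneg less_imp_le)
  define z where "z = (x\<^sup>2 + y\<^sup>2)/(x*y)"
  have zpos: "z > 0" using x y by (simp add: z_def add_pos_pos)
  have z2: "z\<^sup>2 = (p+q)\<^sup>2/(p*q)" using x y by (simp add: z_def p_def q_def power_divide power_mult_distrib)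
  have "z\<^sup>2 * (1 - d\<^sup>2) \<le> 4"
  proof -
    have "(p+q)\<^sup>2 * (1-d\<^sup>2) \<le> 4*(p*q)" using \<open>(p-q)\<^sup>2 \<le> (d*(p+q))\<^sup>2\<close>
      by (simp add: power2_eq_square algebra_simps)
    moreover have "(p+q)\<^sup>2 = p*q*z\<^sup>2" using pq z2 by (simp add: field_simps)
    ultimately have "p*q*(z\<^sup>2 * (1 - d\<^sup>2)) \<le> p*q*4" by (simp add: algebra_simps)
    thus ?thesis using pq by (simp add: mult_le_cancel_left_pos)
  qed
  moreover have "1 \<le> (1-d\<^sup>2)*(1+d\<^sup>2)\<^sup>2"
  proof -
    have "(1-d\<^sup>2)*(1+d\<^sup>2)\<^sup>2 - 1 = d\<^sup>2*(1 - d\<^sup>2 - d\<^sup>2*d\<^sup>2)" by (simp add: power2_eq_square algebra_simps)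
    moreover have "d\<^sup>2*d\<^sup>2 \<le> 3/5 * (3/5)" using d by (intro mult_mono) auto
    moreover have "0 \<le> 1 - d\<^sup>2 - d\<^sup>2*d\<^sup>2" using calculation(2) d by linarith
    ultimately have "0 \<le> (1-d\<^sup>2)*(1+d\<^sup>2)\<^sup>2 - 1" by simp
    thus ?thesis by linarith
  qed
  ultimately have "z\<^sup>2 \<le> (2*(1+d\<^sup>2))\<^sup>2"
  proof -
    have dd: "1 - d\<^sup>2 > 0" using d by simp
    have "z\<^sup>2 \<le> 4/(1-d\<^sup>2)" using \<open>z\<^sup>2 * (1 - d\<^sup>2) \<le> 4\<close> dd by (simp add: field_simps)
    also have "\<dots> \<le> 4*(1+d\<^sup>2)\<^sup>2" using \<open>1 \<le> (1-d\<^sup>2)*(1+d\<^sup>2)\<^sup>2\<close> dd by (simp add: field_simps)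
    also have "\<dots> = (2*(1+d\<^sup>2))\<^sup>2" by (simp add: power2_eq_square algebra_simps)
    finally show ?thesis .
  qed
  hence "z \<le> 2*(1+d\<^sup>2)" by (rule power2_le_imp_le) simp
  moreover have "(x - y)\<^sup>2 / (x*y) = z - 2"
  proof -
    have "(x-y)\<^sup>2 = (x\<^sup>2+y\<^sup>2) - 2*(x*y)" by (simp add: power2_eq_square algebra_simps)
    hence "(x-y)\<^sup>2/(x*y) = (x\<^sup>2+y\<^sup>2)/(x*y) - 2*(x*y)/(x*y)" by (simp add: diff_divide_distrib)
    also have "2*(x*y)/(x*y) = 2" using x y by simp
    finally show ?thesis by (simp add: z_def)
  qed
  ultimately show ?thesis by simp
qed

lemma E_identity:
  fixes s1 s0 T q :: real
  assumes "s1 > 0" "s0 > 0" "T > 0" "0 < q" "q < 1"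
  shows "proxy_mse s1 s0 (q*T) ((1-q)*T) = (s1+s0)\<^sup>2/T * (1 + (s1/(s1+s0) - q)\<^sup>2/(q*(1-q)))"
proof -
  have a: "s1 + s0 > 0" "1 - q > 0" using assms by auto
  have e1: "(s1/(s1+s0) - q)\<^sup>2 = (s1 - q*(s1+s0))\<^sup>2/(s1+s0)\<^sup>2"
    using a by (simp add: power_divide[symmetric] diff_divide_distrib)
  have e2: "s1\<^sup>2*(1-q) + s0\<^sup>2*q = (s1+s0)\<^sup>2*(q*(1-q)) + (s1 - q*(s1+s0))\<^sup>2"
    by (simp add: power2_eq_square algebra_simps)
  have "proxy_mse s1 s0 (q*T) ((1-q)*T) = (s1\<^sup>2*(1-q) + s0\<^sup>2*q)/(q*(1-q)*T)"
    unfolding proxy_mse_def using assms a by (simp add: field_simps)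
  also have "\<dots> = ((s1+s0)\<^sup>2*(q*(1-q)) + (s1 - q*(s1+s0))\<^sup>2)/(q*(1-q)*T)" by (simp only: e2)
  also have "\<dots> = (s1+s0)\<^sup>2/T + (s1 - q*(s1+s0))\<^sup>2/(q*(1-q)*T)"
    using assms a by (simp add: add_divide_distrib)
  also have "\<dots> = (s1+s0)\<^sup>2/T * (1 + (s1/(s1+s0) - q)\<^sup>2/(q*(1-q)))"
    unfolding e1 using assms a by (simp add: field_simps)
  finally show ?thesis .
qed

lemma main_excess:
  fixes s1 s0 u1 u0 :: real
  assumes "s1 > 0" "s0 > 0" "u1 > 0" "u0 > 0"
  shows "(s1/(s1+s0) - u1/(u1+u0))\<^sup>2/((u1/(u1+u0))*(1-u1/(u1+u0)))
     = s1 * s0/(s1+s0)\<^sup>2 * ((u1/s1 - u0/s0)\<^sup>2/((u1/s1)*(u0/s0)))"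
proof -
  have a: "s1 + s0 > 0" "u1 + u0 > 0" using assms by auto
  have b: "1 - u1/(u1+u0) = u0/(u1+u0)" using a by (simp add: field_simps)
  have c: "s1/(s1+s0) - u1/(u1+u0) = (s1 * u0 - s0 * u1)/((s1+s0)*(u1+u0))" using a by (simp add: field_simps)
  have d: "u1/s1 - u0/s0 = (s0 * u1 - s1 * u0)/(s1 * s0)" using assms by (simp add: field_simps)
  have e: "(s0 * u1 - s1 * u0)\<^sup>2 = (s1 * u0 - s0 * u1)\<^sup>2" by (simp add: power2_commute)
  have "(s1/(s1+s0) - u1/(u1+u0))\<^sup>2/((u1/(u1+u0))*(1-u1/(u1+u0)))
      = ((s1 * u0 - s0 * u1)\<^sup>2/((s1+s0)\<^sup>2*(u1+u0)\<^sup>2)) / ((u1 * u0)/(u1+u0)\<^sup>2)"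
    unfolding b c by (simp add: power_divide power_mult_distrib power2_eq_square)
  also have "\<dots> = (s1 * u0 - s0 * u1)\<^sup>2/((s1+s0)\<^sup>2*(u1 * u0))"
    using a assms by (simp add: field_simps)
  also have "\<dots> = s1 * s0/(s1+s0)\<^sup>2 * ((u1/s1 - u0/s0)\<^sup>2/((u1/s1)*(u0/s0)))"
  proof -
    have gen: "\<And>X P U S2::real. P>0 \<Longrightarrow> U>0 \<Longrightarrow> S2>0 \<Longrightarrow> X/(S2*U) = P/S2*((X/P\<^sup>2)/(U/P))"
      by (simp add: field_simps power2_eq_square)
    have f: "(u1/s1)*(u0/s0) = (u1 * u0)/(s1 * s0)" by simp
    show ?thesis unfolding d f power_divide e
      by (rule gen) (use a assms in auto)
  qed
  finally show ?thesis .
qed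

lemma quarter: "s1 > 0 \<Longrightarrow> s0 > 0 \<Longrightarrow> s1 * s0/(s1+s0)\<^sup>2 \<le> (1/4::real)"
proof -
  assume "s1 > 0" "s0 > 0"
  hence "4*(s1 * s0) \<le> (s1+s0)\<^sup>2" using sum_squares_ge_zero[of "s1-s0" 0]
    by (simp add: power2_eq_square algebra_simps)
  thus ?thesis using \<open>s1>0\<close> \<open>s0>0\<close> by (simp add: field_simps)
qed

lemma share_sum: "share x y + share y x = 1"
  unfolding share_def by (auto simp: add.commute add_divide_distrib[symmetric])

lemma share_pos: "x > 0 \<Longrightarrow> y > 0 \<Longrightarrow> share x y = x/(x+y)"
  unfolding share_def by auto

lemma alloc_struct:
  fixes T \<beta> s1 s0 h :: real
  assumes T: "T > 0" and h: "h = \<beta>/2 * sqrt T" "0 < h" "2*h \<le> T"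
  and al: "two_stage_alloc T \<beta> s1 s0 = (t1, t0)"
  shows "\<exists>q. t1 = q*T \<and> t0 = (1-q)*T \<and> h/T \<le> q \<and> q \<le> 1 - h/T \<and>
     ((q = share s1 s0 \<and> share s1 s0 > h/T \<and> share s0 s1 > h/T) \<or>
      (q = h/T \<and> share s1 s0 \<le> h/T) \<or>
      (q = 1 - h/T \<and> share s0 s1 \<le> h/T))"
proof -
  have bh: "\<beta> * sqrt T = 2*h" using h by simp
  have al': "two_stage_alloc T \<beta> s1 s0 = (if share s1 s0 * T > h \<and> share s0 s1 * T > h then (share s1 s0 * T, share s0 s1 * T) else if share s1 s0 * T \<le> h then (h, T - h) else (T - h, h))"
    unfolding two_stage_alloc_def Let_def h(1)[symmetric] bh by simp
  have ss: "share s0 s1 = 1 - share s1 s0" using share_sum[of s1 s0] by simp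
  have hT: "h/T \<le> 1/2" using h T by (simp add: field_simps)
  have cvt: "\<And>x. (x*T > h) = (x > h/T)" "\<And>x. (x*T \<le> h) = (x \<le> h/T)" using T by (auto simp: field_simps)
  show ?thesis
  proof (cases "share s1 s0 * T > h \<and> share s0 s1 * T > h")
    case True
    hence "t1 = share s1 s0 * T" "t0 = share s0 s1 * T" using al al' by auto
    thus ?thesis using True cvt ss by (intro exI[of _ "share s1 s0"]) auto
  next
    case F: False
    show ?thesis
    proof (cases "share s1 s0 * T \<le> h")
      case True
      hence "t1 = h" "t0 = T - h" using al al' F by auto
      thus ?thesis using True cvt T hT by (intro exI[of _ "h/T"]) (auto simp: field_simps)
    next
      case False
      hence "t1 = T - h" "t0 = h" using al al' F by auto
      moreover have "share s0 s1 \<le> h/T" using F False cvt by auto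
      ultimately show ?thesis using T hT by (intro exI[of _ "1 - h/T"]) (auto simp: field_simps)
    qed
  qed
qed

lemma alloc_always:
  fixes T \<beta> s1 s0 h \<sigma>1 \<sigma>0 :: real
  assumes T: "T > 0" and h: "h = \<beta>/2 * sqrt T" "0 < h" "2*h \<le> T"
  and sg: "\<sigma>1 > 0" "\<sigma>0 > 0"
  shows "(case two_stage_alloc T \<beta> s1 s0 of (t1, t0) \<Rightarrow> proxy_mse \<sigma>1 \<sigma>0 t1 t0)
     \<le> (\<sigma>1+\<sigma>0)\<^sup>2/T * (T/h)"
   and "(case two_stage_alloc T \<beta> s1 s0 of (t1, t0) \<Rightarrow> proxy_mse \<sigma>1 \<sigma>0 t1 t0) \<ge> 0"
proof -
  obtain t1 t0 where al: "two_stage_alloc T \<beta> s1 s0 = (t1, t0)" by fastforce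
  from alloc_struct[OF T h al] obtain q where q: "t1 = q*T" "t0 = (1-q)*T" "h/T \<le> q" "q \<le> 1 - h/T" by blast
  have t: "h \<le> t1" "h \<le> t0" using q T by (auto simp: field_simps)
  have "\<sigma>1\<^sup>2/t1 \<le> \<sigma>1\<^sup>2/h" "\<sigma>0\<^sup>2/t0 \<le> \<sigma>0\<^sup>2/h" using t h by (auto intro!: divide_left_mono)
  hence "proxy_mse \<sigma>1 \<sigma>0 t1 t0 \<le> (\<sigma>1\<^sup>2 + \<sigma>0\<^sup>2)/h" unfolding proxy_mse_def by (simp add: add_divide_distrib)
  also have "\<dots> \<le> (\<sigma>1+\<sigma>0)\<^sup>2/h" using sg h by (intro divide_right_mono) (auto simp: power2_eq_square algebra_simps)
  also have "\<dots> = (\<sigma>1+\<sigma>0)\<^sup>2/T * (T/h)" using T h by simp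
  finally show "(case two_stage_alloc T \<beta> s1 s0 of (t1, t0) \<Rightarrow> proxy_mse \<sigma>1 \<sigma>0 t1 t0) \<le> (\<sigma>1+\<sigma>0)\<^sup>2/T * (T/h)"
    using al by simp
  show "(case two_stage_alloc T \<beta> s1 s0 of (t1, t0) \<Rightarrow> proxy_mse \<sigma>1 \<sigma>0 t1 t0) \<ge> 0"
    using al t h unfolding proxy_mse_def by simp
qed

lemma sq_bounds_div:
  fixes s \<sigma> k d :: real
  assumes "\<sigma> > 0" "k*(1-d)*\<sigma>\<^sup>2 \<le> s\<^sup>2" "s\<^sup>2 \<le> k*(1+d)*\<sigma>\<^sup>2"
  shows "k*(1-d) \<le> (s/\<sigma>)\<^sup>2" "(s/\<sigma>)\<^sup>2 \<le> k*(1+d)"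
  using assms by (auto simp: power_divide field_simps)

lemma excess_good:
  fixes \<sigma>1 \<sigma>0 s1 s0 k d :: real
  assumes sg: "\<sigma>1 > 0" "\<sigma>0 > 0" and s: "s1 > 0" "s0 > 0" and k: "k > 0" and d: "0 \<le> d" "d\<^sup>2 \<le> 3/5"
    and b1: "k*(1-d)*\<sigma>1\<^sup>2 \<le> s1\<^sup>2" "s1\<^sup>2 \<le> k*(1+d)*\<sigma>1\<^sup>2"
    and b0: "k*(1-d)*\<sigma>0\<^sup>2 \<le> s0\<^sup>2" "s0\<^sup>2 \<le> k*(1+d)*\<sigma>0\<^sup>2"
  shows "(\<sigma>1/(\<sigma>1+\<sigma>0) - s1/(s1+s0))\<^sup>2/((s1/(s1+s0))*(1-s1/(s1+s0))) \<le> d\<^sup>2/2"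
proof -
  have "(\<sigma>1/(\<sigma>1+\<sigma>0) - s1/(s1+s0))\<^sup>2/((s1/(s1+s0))*(1-s1/(s1+s0)))
     = \<sigma>1 * \<sigma>0/(\<sigma>1+\<sigma>0)\<^sup>2 * ((s1/\<sigma>1 - s0/\<sigma>0)\<^sup>2/((s1/\<sigma>1)*(s0/\<sigma>0)))"
    by (rule main_excess) (use sg s in auto)
  also have "\<dots> \<le> 1/4 * (2*d\<^sup>2)"
  proof (rule mult_mono)
    show "\<sigma>1 * \<sigma>0/(\<sigma>1+\<sigma>0)\<^sup>2 \<le> 1/4" by (rule quarter) (use sg in auto)
    show "(s1/\<sigma>1 - s0/\<sigma>0)\<^sup>2/((s1/\<sigma>1)*(s0/\<sigma>0)) \<le> 2*d\<^sup>2"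
      by (rule key_zz[OF _ _ k d sq_bounds_div[OF sg(1) b1] sq_bounds_div[OF sg(2) b0]]) (use sg s in auto)
  qed (use sg s in auto)
  finally show ?thesis by simp
qed

lemma alloc_good:
  fixes T \<beta> s1 s0 h \<sigma>1 \<sigma>0 k d :: real
  assumes T: "T > 0" and h: "h = \<beta>/2 * sqrt T" "0 < h" "2*h \<le> T"
  and sg: "\<sigma>1 > 0" "\<sigma>0 > 0" and s: "s1 > 0" "s0 > 0" and k: "k > 0" and d: "0 \<le> d" "d\<^sup>2 \<le> 3/5"
    and b1: "k*(1-d)*\<sigma>1\<^sup>2 \<le> s1\<^sup>2" "s1\<^sup>2 \<le> k*(1+d)*\<sigma>1\<^sup>2"
    and b0: "k*(1-d)*\<sigma>0\<^sup>2 \<le> s0\<^sup>2" "s0\<^sup>2 \<le> k*(1+d)*\<sigma>0\<^sup>2"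
  shows "(case two_stage_alloc T \<beta> s1 s0 of (t1, t0) \<Rightarrow> proxy_mse \<sigma>1 \<sigma>0 t1 t0)
     \<le> (\<sigma>1+\<sigma>0)\<^sup>2/T * (1 + max (d\<^sup>2/2) (h/(T-h)))"
proof -
  obtain t1 t0 where al: "two_stage_alloc T \<beta> s1 s0 = (t1, t0)" by fastforce
  define \<rho> where "\<rho> = h/T"
  have \<rho>: "0 < \<rho>" "\<rho> \<le> 1/2" using h T by (auto simp: \<rho>_def field_simps)
  have \<rho>h: "h/(T-h) = \<rho>/(1-\<rho>)" using h T by (simp add: \<rho>_def field_simps)
  from alloc_struct[OF T h al] obtain q where q: "t1 = q*T" "t0 = (1-q)*T" "\<rho> \<le> q" "q \<le> 1 - \<rho>"
     and cs: "(q = share s1 s0 \<and> share s1 s0 > \<rho> \<and> share s0 s1 > \<rho>) \<or>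
      (q = \<rho> \<and> share s1 s0 \<le> \<rho>) \<or> (q = 1 - \<rho> \<and> share s0 s1 \<le> \<rho>)"
    unfolding \<rho>_def by blast
  have q01: "0 < q" "q < 1" using q \<rho> by auto
  define r where "r = \<sigma>1/(\<sigma>1+\<sigma>0)"
  define qh where "qh = s1/(s1+s0)"
  have qh: "share s1 s0 = qh" "share s0 s1 = 1 - qh" "0 < qh" "qh < 1"
    using s by (auto simp: qh_def share_pos field_simps)
  have r01: "0 < r" "r < 1" using sg by (auto simp: r_def field_simps)
  have Fh: "(r - qh)\<^sup>2/(qh*(1-qh)) \<le> d\<^sup>2/2"
    unfolding r_def qh_def by (rule excess_good[OF sg s k d b1 b0])
  have main: "(r - q)\<^sup>2/(q*(1-q)) \<le> max (d\<^sup>2/2) (\<rho>/(1-\<rho>))"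
  proof -
    consider "q = qh" | "q = \<rho>" "qh \<le> \<rho>" | "q = 1 - \<rho>" "1 - qh \<le> \<rho>" using cs qh by auto
    thus ?thesis
    proof cases
      case 1 thus ?thesis using Fh by (metis max.coboundedI1)
    next
      case 2
      show ?thesis
      proof (cases "r \<le> \<rho>")
        case True
        have "(r - q)\<^sup>2 \<le> \<rho>\<^sup>2" using True r01 2 \<rho> by (intro power2_le_iff_abs_le[THEN iffD2]) auto
        hence "(r - q)\<^sup>2/(q*(1-q)) \<le> \<rho>\<^sup>2/(\<rho>*(1-\<rho>))" unfolding 2(1) using \<rho> by (intro divide_right_mono) auto
        also have "\<dots> = \<rho>/(1-\<rho>)" using \<rho> by (simp add: power2_eq_square)
        finally show ?thesis by simp
      next
        case False
        have "(r - q)\<^sup>2 \<le> (r - qh)\<^sup>2" using False 2 qh by (intro power_mono) auto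
        moreover have "qh*(1-qh) \<le> q*(1-q)"
        proof -
          have "q*(1-q) - qh*(1-qh) = (q - qh)*(1 - q - qh)" by (simp add: algebra_simps)
          moreover have "0 \<le> (q - qh)*(1 - q - qh)" using 2 \<rho> by (intro mult_nonneg_nonneg) auto
          ultimately show ?thesis by simp
        qed
        ultimately have "(r - q)\<^sup>2/(q*(1-q)) \<le> (r - qh)\<^sup>2/(qh*(1-qh))" using qh q01
          by (intro frac_le) auto
        thus ?thesis using Fh by (meson max.coboundedI1 order_trans)
      qed
    next
      case 3
      show ?thesis
      proof (cases "r \<ge> 1 - \<rho>")
        case True
        have "(r - q)\<^sup>2 \<le> \<rho>\<^sup>2" using True r01 3 \<rho> by (intro power2_le_iff_abs_le[THEN iffD2]) auto
        hence "(r - q)\<^sup>2/(q*(1-q)) \<le> \<rho>\<^sup>2/((1-\<rho>)*(1-(1-\<rho>)))" unfolding 3(1) using \<rho> by (intro divide_right_mono) auto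
        also have "\<dots> = \<rho>\<^sup>2/((1-\<rho>)*\<rho>)" by simp
        also have "\<dots> = \<rho>/(1-\<rho>)" using \<rho> by (simp add: power2_eq_square)
        finally show ?thesis by simp
      next
        case False
        have "(q - r)\<^sup>2 \<le> (qh - r)\<^sup>2" using False 3 qh by (intro power_mono) auto
        hence "(r - q)\<^sup>2 \<le> (r - qh)\<^sup>2" by (simp add: power2_commute)
        moreover have "qh*(1-qh) \<le> q*(1-q)"
        proof -
          have "q*(1-q) - qh*(1-qh) = (qh - q)*(q + qh - 1)" by (simp add: algebra_simps)
          moreover have "0 \<le> (qh - q)*(q + qh - 1)" using 3 \<rho> by (intro mult_nonneg_nonneg) auto
          ultimately show ?thesis by simp
        qed
        ultimately have "(r - q)\<^sup>2/(q*(1-q)) \<le> (r - qh)\<^sup>2/(qh*(1-qh))" using qh q01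
          by (intro frac_le) auto
        thus ?thesis using Fh by (meson max.coboundedI1 order_trans)
      qed
    qed
  qed
  have "proxy_mse \<sigma>1 \<sigma>0 t1 t0 = (\<sigma>1+\<sigma>0)\<^sup>2/T * (1 + (r - q)\<^sup>2/(q*(1-q)))"
    unfolding q(1,2) r_def by (rule E_identity) (use sg T q01 in auto)
  also have "\<dots> \<le> (\<sigma>1+\<sigma>0)\<^sup>2/T * (1 + max (d\<^sup>2/2) (h/(T-h)))"
    using main T \<rho>h by (intro mult_left_mono) auto
  finally show ?thesis using al by simp
qed

lemma ln_le_half: "y > 0 \<Longrightarrow> ln y \<le> y/(2::real)"
proof -
  assume y: "y > 0"
  have e: "exp 1 \<ge> (2::real)" using exp_ge_add_one_self[of 1] by simp
  have "ln (y/exp 1) \<le> y/exp 1 - 1" using y by (intro ln_le_minus_one) simp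
  hence "ln y \<le> y/exp 1" using y by (simp add: ln_div)
  also have "\<dots> \<le> y/2" using y e by (intro divide_left_mono) auto
  finally show ?thesis .
qed

lemma num_main:
  fixes C T :: real
  assumes C: "0 < C" and T: "T \<ge> 320 powr (5/4) * C ^ 5" and L: "ln T \<ge> 0"
  shows "C^4 * ln T \<le> T/128"
proof -
  have p: "320 powr (5/4) > (0::real)" by simp
  have Tpos: "T > 0" using T p C by (smt (verit) mult_pos_pos zero_less_power)
  have c5: "C^5 \<le> T / 320 powr (5/4)" using T p by (simp add: field_simps)
  have "(C^5) powr (4/5) = (C powr 5) powr (4/5)" using C by simp
  also have "\<dots> = C powr (5 * (4/5))" by (rule powr_powr)
  also have "\<dots> = C^4" using C by simp
  finally have "C^4 = (C^5) powr (4/5)" by simp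
  also have "\<dots> \<le> (T / 320 powr (5/4)) powr (4/5)" using c5 C by (intro powr_mono2) auto
  also have "\<dots> = T powr (4/5) / (320 powr (5/4)) powr (4/5)" by (rule powr_divide)
  also have "(320 powr (5/4)) powr (4/5) = (320::real) powr ((5/4) * (4/5))" by (rule powr_powr)
  also have "(320::real) powr ((5/4) * (4/5)) = 320" by simp
  finally have c4: "C^4 \<le> T powr (4/5) / 320" .
  have "ln T = 5 * ln (T powr (1/5))" using Tpos by (simp add: ln_powr)
  also have "\<dots> \<le> 5 * (T powr (1/5) / 2)" using Tpos by (intro mult_left_mono ln_le_half) auto
  finally have lT: "ln T \<le> 5/2 * T powr (1/5)" by simp
  have "C^4 * ln T \<le> (T powr (4/5) / 320) * (5/2 * T powr (1/5))"
    using c4 lT L C by (intro mult_mono) auto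
  also have "\<dots> = T powr (4/5) * T powr (1/5) / 128" by simp
  also have "\<dots> = T / 128" using Tpos by (simp add: powr_add[symmetric])
  finally show ?thesis .
qed

lemma comp_distr:
  assumes Q: "prob_space Q" and i: "i \<in> I"
  shows "distr (PiM I (\<lambda>_. Q)) Q (\<lambda>y. y i) = Q"
  using distr_PiM_component[of I "\<lambda>_. Q" i] Q i by simp

lemma comp_integral:
  fixes h :: "'a \<Rightarrow> real"
  assumes Q: "prob_space Q" and i: "i \<in> I" and h: "h \<in> borel_measurable Q"
  shows "(\<integral>y. h (y i) \<partial>PiM I (\<lambda>_. Q)) = (\<integral>x. h x \<partial>Q)"
proof -
  have m: "(\<lambda>y. y i) \<in> measurable (PiM I (\<lambda>_. Q)) Q" using i by measurable
  have "(\<integral>y. h (y i) \<partial>PiM I (\<lambda>_. Q)) = integral\<^sup>L (distr (PiM I (\<lambda>_. Q)) Q (\<lambda>y. y i)) h"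
    by (rule integral_distr[symmetric, OF m h])
  also have "\<dots> = (\<integral>x. h x \<partial>Q)" using comp_distr[OF Q i] by simp
  finally show ?thesis .
qed

lemma comp_indep:
  fixes g :: "'a \<Rightarrow> real"
  assumes Q: "prob_space Q" and I: "I \<noteq> {}" and J: "J \<subseteq> I" and g: "g \<in> borel_measurable Q"
  shows "prob_space.indep_vars (PiM I (\<lambda>_. Q)) (\<lambda>_. borel) (\<lambda>t y. g (y t)) J"
proof -
  let ?M = "PiM I (\<lambda>_. Q)"
  interpret P: prob_space ?M using Q by (intro prob_space_PiM) auto
  have rv: "\<And>i. i \<in> I \<Longrightarrow> (\<lambda>y. y i) \<in> measurable ?M Q" using measurable_component_singleton[of _ I "\<lambda>_. Q"] by simp
  have "distr ?M (PiM I (\<lambda>_. Q)) (\<lambda>x. \<lambda>i\<in>I. x i) = distr ?M ?M (\<lambda>x. x)"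
  proof (rule distr_cong)
    fix x assume "x \<in> space ?M"
    thus "(\<lambda>i\<in>I. x i) = x" by (auto simp: space_PiM PiE_def extensional_def fun_eq_iff)
  qed auto
  also have "\<dots> = ?M" by simp
  also have "\<dots> = PiM I (\<lambda>i. distr ?M Q (\<lambda>y. y i))"
    by (rule PiM_cong) (auto simp: comp_distr[OF Q])
  finally have "P.indep_vars (\<lambda>_. Q) (\<lambda>i y. y i) I"
    using P.indep_vars_iff_distr_eq_PiM'[OF I rv] by simp
  hence "P.indep_vars (\<lambda>_. borel) (\<lambda>i y. g (y i)) I"
    by (rule P.indep_vars_compose2) (use g in auto)
  thus ?thesis using J by (rule P.indep_vars_subset)
qed

lemma moments:
  fixes Q :: "'a measure" and \<phi> :: "'a \<Rightarrow> real" and B :: real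
  assumes Q: "prob_space Q" and \<phi>: "\<phi> \<in> borel_measurable Q" and bd: "AE x in Q. \<bar>\<phi> x\<bar> \<le> B"
  shows "integrable Q \<phi>" "integrable Q (\<lambda>x. (\<phi> x)\<^sup>2)"
    "(\<integral>x. (\<phi> x - (\<integral>y. \<phi> y \<partial>Q))\<^sup>2 \<partial>Q) = (\<integral>x. (\<phi> x)\<^sup>2 \<partial>Q) - (\<integral>y. \<phi> y \<partial>Q)\<^sup>2"
    "\<bar>\<integral>y. \<phi> y \<partial>Q\<bar> \<le> B" "(\<integral>x. (\<phi> x)\<^sup>2 \<partial>Q) \<le> B\<^sup>2"
proof -
  interpret prob_space Q by (rule Q)
  show i1: "integrable Q \<phi>" by (rule integrable_const_bound[of _ B]) (use bd \<phi> in auto)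
  have bd2: "AE x in Q. norm ((\<phi> x)\<^sup>2) \<le> B\<^sup>2"
    using bd by eventually_elim (auto simp: abs_le_square_iff[symmetric] intro: power_mono)
  show i2: "integrable Q (\<lambda>x. (\<phi> x)\<^sup>2)" by (rule integrable_const_bound[OF bd2]) (use \<phi> in auto)
  define \<mu> where "\<mu> = (\<integral>y. \<phi> y \<partial>Q)"
  have "(\<lambda>x. (\<phi> x - \<mu>)\<^sup>2) = (\<lambda>x. ((\<phi> x)\<^sup>2 - 2*\<mu>*\<phi> x) + \<mu>\<^sup>2)"
    by (auto simp: power2_eq_square algebra_simps)
  hence "(\<integral>x. (\<phi> x - \<mu>)\<^sup>2 \<partial>Q) = (\<integral>x. ((\<phi> x)\<^sup>2 - 2*\<mu>*\<phi> x) \<partial>Q) + \<mu>\<^sup>2"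
    using i1 i2 by (simp add: integral_add prob_space)
  also have "(\<integral>x. ((\<phi> x)\<^sup>2 - 2*\<mu>*\<phi> x) \<partial>Q) = (\<integral>x. (\<phi> x)\<^sup>2 \<partial>Q) - 2*\<mu>*\<mu>"
    using i1 i2 by (simp add: integral_diff \<mu>_def)
  finally show "(\<integral>x. (\<phi> x - (\<integral>y. \<phi> y \<partial>Q))\<^sup>2 \<partial>Q) = (\<integral>x. (\<phi> x)\<^sup>2 \<partial>Q) - (\<integral>y. \<phi> y \<partial>Q)\<^sup>2"
    by (simp add: \<mu>_def power2_eq_square)
  have "\<bar>\<integral>y. \<phi> y \<partial>Q\<bar> \<le> (\<integral>y. \<bar>\<phi> y\<bar> \<partial>Q)" by (rule integral_abs_bound)
  also have "\<dots> \<le> (\<integral>y. B \<partial>Q)" using bd i1 by (intro integral_mono_AE) auto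
  finally show "\<bar>\<integral>y. \<phi> y \<partial>Q\<bar> \<le> B" by (simp add: prob_space)
  have "(\<integral>x. (\<phi> x)\<^sup>2 \<partial>Q) \<le> (\<integral>x. B\<^sup>2 \<partial>Q)" using bd2 i2 by (intro integral_mono_AE) auto
  thus "(\<integral>x. (\<phi> x)\<^sup>2 \<partial>Q) \<le> B\<^sup>2" by (simp add: prob_space)
qed

lemma f_range:
  fixes x m c :: real
  assumes "\<bar>x\<bar> \<le> c" "\<bar>m\<bar> \<le> c"
  shows "-(c\<^sup>2) \<le> x\<^sup>2 - 2*m*x" "x\<^sup>2 - 2*m*x \<le> 3*c\<^sup>2"
proof -
  have "m\<^sup>2 \<le> c\<^sup>2" using assms by (simp add: abs_le_square_iff[symmetric] power_mono abs_le_iff)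
  moreover have "0 \<le> (x - m)\<^sup>2" by simp
  ultimately show "-(c\<^sup>2) \<le> x\<^sup>2 - 2*m*x" by (simp add: power2_eq_square algebra_simps)
  have "x\<^sup>2 \<le> c\<^sup>2" using assms by (metis abs_le_square_iff abs_of_nonneg order_trans abs_ge_zero)
  moreover have "\<bar>2*m*x\<bar> \<le> 2*c*c" using assms by (simp add: abs_mult mult_mono)
  ultimately show "x\<^sup>2 - 2*m*x \<le> 3*c\<^sup>2" by (simp add: power2_eq_square abs_le_iff)
qed

lemma sum_sq_dev:
  fixes a :: "'b \<Rightarrow> real" and J :: "'b set"
  assumes "finite J" "card J = n" "n > 0"
  shows "(\<Sum>t\<in>J. (a t - (\<Sum>j\<in>J. a j)/real n)\<^sup>2) = (\<Sum>t\<in>J. (a t)\<^sup>2) - (\<Sum>j\<in>J. a j)\<^sup>2/real n"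
proof -
  define m where "m = (\<Sum>j\<in>J. a j)/real n"
  have "(\<Sum>t\<in>J. (a t - m)\<^sup>2) = (\<Sum>t\<in>J. (a t)\<^sup>2 - 2*m*a t + m\<^sup>2)"
    by (intro sum.cong) (auto simp: power2_eq_square algebra_simps)
  also have "\<dots> = (\<Sum>t\<in>J. (a t)\<^sup>2) - 2*m*(\<Sum>t\<in>J. a t) + real n * m\<^sup>2"
    using assms by (simp add: sum.distrib sum_subtractf sum_distrib_left)
  also have "\<dots> = (\<Sum>t\<in>J. (a t)\<^sup>2) - (\<Sum>j\<in>J. a j)\<^sup>2/real n"
    using assms by (simp add: m_def power2_eq_square field_simps)
  finally show ?thesis by (simp add: m_def)
qed

lemma sv_bounds:
  fixes S1 S2 \<mu> \<sigma> \<theta> :: real and n :: nat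
  assumes n: "n \<ge> 2" and \<theta>: "\<theta> > 0" and \<sigma>: "\<sigma> > 0"
    and Da: "\<bar>S2 - 2*\<mu>*S1 - real n*(\<sigma>\<^sup>2 - \<mu>\<^sup>2)\<bar> < real n*(2*\<theta>)*\<sigma>\<^sup>2"
    and Db: "\<bar>S1 - real n*\<mu>\<bar> < real n*\<theta>*\<sigma>"
  shows "real n/(real n - 1)*(1-(2*\<theta>+\<theta>\<^sup>2))*\<sigma>\<^sup>2 \<le> (S2 - S1\<^sup>2/real n)/(real n - 1)"
    "(S2 - S1\<^sup>2/real n)/(real n - 1) \<le> real n/(real n - 1)*(1+(2*\<theta>+\<theta>\<^sup>2))*\<sigma>\<^sup>2"
proof -
  define D where "D = S2 - 2*\<mu>*S1 - real n*(\<sigma>\<^sup>2 - \<mu>\<^sup>2)"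
  have np: "real n > 0" "real n - 1 > 0" using n by auto
  have id: "S2 - S1\<^sup>2/real n - real n*\<sigma>\<^sup>2 = D - (S1 - real n*\<mu>)\<^sup>2/real n"
    using np by (simp add: D_def field_simps power2_eq_square)
  have "(S1 - real n*\<mu>)\<^sup>2 \<le> (real n*\<theta>*\<sigma>)\<^sup>2"
    using Db by (intro power2_le_iff_abs_le[THEN iffD2]) auto
  hence sq: "(S1 - real n*\<mu>)\<^sup>2/real n \<le> real n*\<theta>\<^sup>2*\<sigma>\<^sup>2"
    using np by (simp add: field_simps power2_eq_square)
  have sq0: "0 \<le> (S1 - real n*\<mu>)\<^sup>2/real n" using np by simp
  have Dl: "\<bar>D\<bar> < real n*(2*\<theta>)*\<sigma>\<^sup>2" using Da by (simp add: D_def)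
  have lo: "real n*(1-(2*\<theta>+\<theta>\<^sup>2))*\<sigma>\<^sup>2 \<le> S2 - S1\<^sup>2/real n"
  proof -
    have "real n*(1-(2*\<theta>+\<theta>\<^sup>2))*\<sigma>\<^sup>2 = real n*\<sigma>\<^sup>2 - real n*(2*\<theta>)*\<sigma>\<^sup>2 - real n*\<theta>\<^sup>2*\<sigma>\<^sup>2"
      by (simp add: algebra_simps)
    also have "\<dots> \<le> real n*\<sigma>\<^sup>2 + D - (S1 - real n*\<mu>)\<^sup>2/real n" using Dl sq by (simp add: abs_less_iff)
    also have "\<dots> = S2 - S1\<^sup>2/real n" using id by simp
    finally show ?thesis .
  qed
  have hi: "S2 - S1\<^sup>2/real n \<le> real n*(1+(2*\<theta>+\<theta>\<^sup>2))*\<sigma>\<^sup>2"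
  proof -
    have "S2 - S1\<^sup>2/real n = real n*\<sigma>\<^sup>2 + D - (S1 - real n*\<mu>)\<^sup>2/real n" using id by simp
    also have "\<dots> \<le> real n*\<sigma>\<^sup>2 + real n*(2*\<theta>)*\<sigma>\<^sup>2 + real n*\<theta>\<^sup>2*\<sigma>\<^sup>2"
    proof -
      have "D < real n*(2*\<theta>)*\<sigma>\<^sup>2" using Dl by simp
      moreover have "0 \<le> real n*\<theta>\<^sup>2*\<sigma>\<^sup>2" by simp
      ultimately show ?thesis using sq0 by linarith
    qed
    also have "\<dots> = real n*(1+(2*\<theta>+\<theta>\<^sup>2))*\<sigma>\<^sup>2" by (simp add: algebra_simps)
    finally show ?thesis .
  qed
  show "real n/(real n - 1)*(1-(2*\<theta>+\<theta>\<^sup>2))*\<sigma>\<^sup>2 \<le> (S2 - S1\<^sup>2/real n)/(real n - 1)"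
  proof -
    have "real n/(real n - 1)*(1-(2*\<theta>+\<theta>\<^sup>2))*\<sigma>\<^sup>2 = (real n*(1-(2*\<theta>+\<theta>\<^sup>2))*\<sigma>\<^sup>2)/(real n - 1)" by simp
    also have "\<dots> \<le> (S2 - S1\<^sup>2/real n)/(real n - 1)" using lo np by (intro divide_right_mono) auto
    finally show ?thesis .
  qed
  show "(S2 - S1\<^sup>2/real n)/(real n - 1) \<le> real n/(real n - 1)*(1+(2*\<theta>+\<theta>\<^sup>2))*\<sigma>\<^sup>2"
  proof -
    have "(S2 - S1\<^sup>2/real n)/(real n - 1) \<le> (real n*(1+(2*\<theta>+\<theta>\<^sup>2))*\<sigma>\<^sup>2)/(real n - 1)" using hi np by (intro divide_right_mono) auto
    also have "\<dots> = real n/(real n - 1)*(1+(2*\<theta>+\<theta>\<^sup>2))*\<sigma>\<^sup>2" by simp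
    finally show ?thesis .
  qed
qed

lemma arm:
  fixes Q :: "'a measure" and \<phi> :: "'a \<Rightarrow> real" and I J :: "'b set" and n :: nat and C \<theta> :: real
  assumes Q: "prob_space Q" and \<phi>: "\<phi> \<in> borel_measurable Q" and \<sigma>: "sd Q \<phi> > 0"
    and bd: "AE x in Q. \<bar>\<phi> x\<bar> \<le> C * sd Q \<phi>" and C: "C > 0"
    and I: "finite I" and J: "J \<subseteq> I" "card J = n" and n: "n \<ge> 2" and \<theta>: "\<theta> > 0"
  shows "\<exists>E \<in> sets (PiM I (\<lambda>_. Q)). measure (PiM I (\<lambda>_. Q)) E \<le> 2*exp(-(real n*\<theta>\<^sup>2/(2*C^4))) + 2*exp(-(real n*\<theta>\<^sup>2/(2*C\<^sup>2))) \<and>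
     (\<forall>y \<in> space (PiM I (\<lambda>_. Q)) - E.
        real n/(real n - 1)*(1-(2*\<theta>+\<theta>\<^sup>2))*(sd Q \<phi>)\<^sup>2 \<le> sample_var J (\<lambda>t. \<phi> (y t)) \<and>
        sample_var J (\<lambda>t. \<phi> (y t)) \<le> real n/(real n - 1)*(1+(2*\<theta>+\<theta>\<^sup>2))*(sd Q \<phi>)\<^sup>2)"
proof -
  define M where "M = PiM I (\<lambda>_. Q)"
  define s where "s = sd Q \<phi>"
  define \<mu> where "\<mu> = (\<integral>x. \<phi> x \<partial>Q)"
  define m2 where "m2 = (\<integral>x. (\<phi> x)\<^sup>2 \<partial>Q)"
  define f where "f = (\<lambda>x::real. x\<^sup>2 - 2*\<mu>*x)"
  note [measurable] = \<phi>
  have fm[measurable]: "f \<in> borel_measurable borel" unfolding f_def by measurable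
  interpret P: prob_space M unfolding M_def using Q by (intro prob_space_PiM) auto
  have Jf: "finite J" using I J finite_subset by blast
  have Jne: "J \<noteq> {}" using J n by auto
  have Ine: "I \<noteq> {}" using Jne J by auto
  note mom = moments[OF Q \<phi> bd]
  have s2: "s\<^sup>2 = m2 - \<mu>\<^sup>2"
  proof -
    have "0 \<le> (\<integral>x. (\<phi> x - \<mu>)\<^sup>2 \<partial>Q)" by (rule integral_nonneg_AE) auto
    hence "s\<^sup>2 = (\<integral>x. (\<phi> x - \<mu>)\<^sup>2 \<partial>Q)" unfolding s_def sd_def \<mu>_def by simp
    thus ?thesis using mom(3) by (simp add: m2_def \<mu>_def)
  qed
  have s: "s > 0" using \<sigma> by (simp add: s_def)
  have mu: "\<bar>\<mu>\<bar> \<le> C * s" using mom(4) by (simp add: \<mu>_def s_def)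
  have cs: "C * s > 0" using C s by simp
  have AEc: "\<And>t. t \<in> I \<Longrightarrow> AE y in M. \<bar>\<phi> (y t)\<bar> \<le> C * s"
    unfolding M_def s_def by (rule AE_PiM_component) (use Q bd in auto)
  have compint: "\<And>t (h::'a \<Rightarrow> real). t \<in> I \<Longrightarrow> h \<in> borel_measurable Q \<Longrightarrow> (\<integral>y. h (y t) \<partial>M) = (\<integral>x. h x \<partial>Q)"
    unfolding M_def by (rule comp_integral[OF Q])
  have ind: "\<And>(g::'a \<Rightarrow> real). g \<in> borel_measurable Q \<Longrightarrow> P.indep_vars (\<lambda>_. borel) (\<lambda>t y. g (y t)) J"
    unfolding M_def by (rule comp_indep[OF Q Ine J(1)])
  have fphi: "(\<lambda>x. f (\<phi> x)) \<in> borel_measurable Q" by measurable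
  define Ea where "Ea = {y \<in> space M. real n*(2*\<theta> * s\<^sup>2) \<le> \<bar>(\<Sum>t\<in>J. f (\<phi> (y t))) - real n*(s\<^sup>2 - \<mu>\<^sup>2)\<bar>}"
  define Eb where "Eb = {y \<in> space M. real n*(\<theta> * s) \<le> \<bar>(\<Sum>t\<in>J. \<phi> (y t)) - real n*\<mu>\<bar>}"
  have sm1[measurable]: "(\<lambda>y. \<Sum>t\<in>J. f (\<phi> (y t))) \<in> borel_measurable M"
  proof (intro borel_measurable_sum)
    fix t assume "t \<in> J" hence t: "t \<in> I" using J by auto
    show "(\<lambda>y. f (\<phi> (y t))) \<in> borel_measurable M" unfolding M_def
      by (rule measurable_compose[OF measurable_component_singleton[OF t] fphi])
  qed
  have sm2[measurable]: "(\<lambda>y. \<Sum>t\<in>J. \<phi> (y t)) \<in> borel_measurable M"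
  proof (intro borel_measurable_sum)
    fix t assume "t \<in> J" hence t: "t \<in> I" using J by auto
    show "(\<lambda>y. \<phi> (y t)) \<in> borel_measurable M" unfolding M_def
      by (rule measurable_compose[OF measurable_component_singleton[OF t] \<phi>])
  qed
  have Ea_sets: "Ea \<in> sets M" unfolding Ea_def by measurable
  have Eb_sets: "Eb \<in> sets M" unfolding Eb_def by measurable
  have PEa: "measure M Ea \<le> 2*exp(-(real n*\<theta>\<^sup>2/(2*C^4)))"
  proof -
    interpret H: Hoeffding_ineq M J "\<lambda>t y. f (\<phi> (y t))" "\<lambda>_. -((C * s)\<^sup>2)" "\<lambda>_. 3*(C * s)\<^sup>2" "real n*(s\<^sup>2 - \<mu>\<^sup>2)"
    proof unfold_locales
      show "finite J" by (rule Jf)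
      show "P.indep_vars (\<lambda>_. borel) (\<lambda>t y. f (\<phi> (y t))) J" by (rule ind[OF fphi])
      fix i assume i: "i \<in> J"
      have iI: "i \<in> I" using i J by auto
      show "AE x in M. f (\<phi> (x i)) \<in> {-((C * s)\<^sup>2) .. 3*(C * s)\<^sup>2}"
        using AEc[OF iI] by eventually_elim (use f_range mu in \<open>auto simp: f_def\<close>)
    next
      have "\<And>t. t \<in> J \<Longrightarrow> P.expectation (\<lambda>y. f (\<phi> (y t))) = s\<^sup>2 - \<mu>\<^sup>2"
      proof -
        fix t assume t: "t \<in> J"
        have "P.expectation (\<lambda>y. f (\<phi> (y t))) = (\<integral>x. f (\<phi> x) \<partial>Q)" using t J by (intro compint fphi) auto
        also have "\<dots> = m2 - 2*\<mu>*\<mu>" unfolding f_def m2_def \<mu>_def using mom(1,2) by (simp add: integral_diff)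
        finally show "P.expectation (\<lambda>y. f (\<phi> (y t))) = s\<^sup>2 - \<mu>\<^sup>2" using s2 by (simp add: power2_eq_square)
      qed
      thus "real n*(s\<^sup>2 - \<mu>\<^sup>2) \<equiv> (\<Sum>t\<in>J. P.expectation (\<lambda>y. f (\<phi> (y t))))" using J by simp
    qed
    have pos: "(\<Sum>i\<in>J. (3*(C * s)\<^sup>2 - -((C * s)\<^sup>2))\<^sup>2) > 0" using Jf Jne cs by (intro sum_pos) auto
    have "measure M Ea \<le> 2 * exp (-2 * (real n*(2*\<theta> * s\<^sup>2))\<^sup>2 / (\<Sum>i\<in>J. (3*(C * s)\<^sup>2 - -((C * s)\<^sup>2))\<^sup>2))"
      using H.Hoeffding_ineq_abs_ge[OF _ pos, of "real n*(2*\<theta> * s\<^sup>2)"] \<theta> s unfolding Ea_def by simp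
    also have "-2 * (real n*(2*\<theta> * s\<^sup>2))\<^sup>2 / (\<Sum>i\<in>J. (3*(C * s)\<^sup>2 - -((C * s)\<^sup>2))\<^sup>2) = -(real n*\<theta>\<^sup>2/(2*C^4))"
      using J n s C by (simp add: power2_eq_square field_simps power4_eq_xxxx)
    finally show ?thesis .
  qed
  have PEb: "measure M Eb \<le> 2*exp(-(real n*\<theta>\<^sup>2/(2*C\<^sup>2)))"
  proof -
    interpret H: Hoeffding_ineq M J "\<lambda>t y. \<phi> (y t)" "\<lambda>_. -(C * s)" "\<lambda>_. C * s" "real n*\<mu>"
    proof unfold_locales
      show "finite J" by (rule Jf)
      show "P.indep_vars (\<lambda>_. borel) (\<lambda>t y. \<phi> (y t)) J" by (rule ind[OF \<phi>])
      fix i assume i: "i \<in> J"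
      have iI: "i \<in> I" using i J by auto
      show "AE x in M. \<phi> (x i) \<in> {-(C * s) .. C * s}"
        using AEc[OF iI] by eventually_elim auto
    next
      have "\<And>t. t \<in> J \<Longrightarrow> P.expectation (\<lambda>y. \<phi> (y t)) = \<mu>"
        unfolding \<mu>_def using J by (intro compint \<phi>) auto
      thus "real n*\<mu> \<equiv> (\<Sum>t\<in>J. P.expectation (\<lambda>y. \<phi> (y t)))" using J by simp
    qed
    have pos: "(\<Sum>i\<in>J. (C * s - -(C * s))\<^sup>2) > 0" using Jf Jne cs by (intro sum_pos) auto
    have "measure M Eb \<le> 2 * exp (-2 * (real n*(\<theta> * s))\<^sup>2 / (\<Sum>i\<in>J. (C * s - -(C * s))\<^sup>2))"
      using H.Hoeffding_ineq_abs_ge[OF _ pos, of "real n*(\<theta> * s)"] \<theta> s unfolding Eb_def by simp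
    also have "-2 * (real n*(\<theta> * s))\<^sup>2 / (\<Sum>i\<in>J. (C * s - -(C * s))\<^sup>2) = -(real n*\<theta>\<^sup>2/(2*C\<^sup>2))"
      using J n s C by (simp add: power2_eq_square field_simps)
    finally show ?thesis .
  qed
  show ?thesis
  proof (rule bexI[of _ "Ea \<union> Eb"])
    show "Ea \<union> Eb \<in> sets (PiM I (\<lambda>_. Q))" using Ea_sets Eb_sets by (simp add: M_def)
    have "measure M (Ea \<union> Eb) \<le> measure M Ea + measure M Eb"
      using Ea_sets Eb_sets by (intro measure_Un_le) auto
    hence m: "measure (PiM I (\<lambda>_. Q)) (Ea \<union> Eb) \<le> 2*exp(-(real n*\<theta>\<^sup>2/(2*C^4))) + 2*exp(-(real n*\<theta>\<^sup>2/(2*C\<^sup>2)))"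
      using PEa PEb by (simp add: M_def)
    have "\<forall>y \<in> space (PiM I (\<lambda>_. Q)) - (Ea \<union> Eb).
        real n/(real n - 1)*(1-(2*\<theta>+\<theta>\<^sup>2))*(sd Q \<phi>)\<^sup>2 \<le> sample_var J (\<lambda>t. \<phi> (y t)) \<and>
        sample_var J (\<lambda>t. \<phi> (y t)) \<le> real n/(real n - 1)*(1+(2*\<theta>+\<theta>\<^sup>2))*(sd Q \<phi>)\<^sup>2"
    proof
    fix y assume y: "y \<in> space (PiM I (\<lambda>_. Q)) - (Ea \<union> Eb)"
    define S1 where "S1 = (\<Sum>t\<in>J. \<phi> (y t))"
    define S2 where "S2 = (\<Sum>t\<in>J. (\<phi> (y t))\<^sup>2)"
    have Da: "\<bar>S2 - 2*\<mu>*S1 - real n*(s\<^sup>2 - \<mu>\<^sup>2)\<bar> < real n*(2*\<theta>) * s\<^sup>2"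
    proof -
      have "(\<Sum>t\<in>J. f (\<phi> (y t))) = S2 - 2*\<mu>*S1"
        unfolding f_def S1_def S2_def by (simp add: sum_subtractf sum_distrib_left)
      thus ?thesis using y by (auto simp: Ea_def M_def)
    qed
    have Db: "\<bar>S1 - real n*\<mu>\<bar> < real n*\<theta> * s" using y by (auto simp: Eb_def M_def S1_def)
    have sv: "sample_var J (\<lambda>t. \<phi> (y t)) = (S2 - S1\<^sup>2/real n)/(real n - 1)"
      unfolding sample_var_def using sum_sq_dev[OF Jf J(2)] n J(2) by (simp add: S1_def S2_def)
    show "real n/(real n - 1)*(1-(2*\<theta>+\<theta>\<^sup>2))*(sd Q \<phi>)\<^sup>2 \<le> sample_var J (\<lambda>t. \<phi> (y t)) \<and>
        sample_var J (\<lambda>t. \<phi> (y t)) \<le> real n/(real n - 1)*(1+(2*\<theta>+\<theta>\<^sup>2))*(sd Q \<phi>)\<^sup>2"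
      unfolding sv s_def[symmetric] using sv_bounds[OF n \<theta> s Da Db] by simp
  qed
  thus "measure (PiM I (\<lambda>_. Q)) (Ea \<union> Eb) \<le> 2*exp(-(real n*\<theta>\<^sup>2/(2*C^4))) + 2*exp(-(real n*\<theta>\<^sup>2/(2*C\<^sup>2))) \<and> (\<forall>y \<in> space (PiM I (\<lambda>_. Q)) - (Ea \<union> Eb).
        real n/(real n - 1)*(1-(2*\<theta>+\<theta>\<^sup>2))*(sd Q \<phi>)\<^sup>2 \<le> sample_var J (\<lambda>t. \<phi> (y t)) \<and>
        sample_var J (\<lambda>t. \<phi> (y t)) \<le> real n/(real n - 1)*(1+(2*\<theta>+\<theta>\<^sup>2))*(sd Q \<phi>)\<^sup>2)" using m by blast
  qed
qed

lemma fst_meas: "sets Q = sets (borel :: (real \<times> real) measure) \<Longrightarrow> fst \<in> borel_measurable Q"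
  "sets Q = sets (borel :: (real \<times> real) measure) \<Longrightarrow> snd \<in> borel_measurable Q"
proof -
  assume s: "sets Q = sets (borel :: (real \<times> real) measure)"
  have b: "(borel \<Otimes>\<^sub>M borel) = (borel :: (real \<times> real) measure)" by (rule borel_prod)
  have e: "sets Q = sets (borel \<Otimes>\<^sub>M (borel :: real measure))" unfolding b by (rule s)
  show "fst \<in> borel_measurable Q" unfolding measurable_cong_sets[OF e refl] by (rule measurable_fst)
  show "snd \<in> borel_measurable Q" unfolding measurable_cong_sets[OF e refl] by (rule measurable_snd)
qed

lemma good_sq:
  fixes v \<sigma> k d :: real
  assumes "k*(1-d)*\<sigma>\<^sup>2 \<le> v" "v \<le> k*(1+d)*\<sigma>\<^sup>2" "k > 0" "d < 1" "\<sigma> > 0"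
  shows "sqrt v > 0" "k*(1-d)*\<sigma>\<^sup>2 \<le> (sqrt v)\<^sup>2" "(sqrt v)\<^sup>2 \<le> k*(1+d)*\<sigma>\<^sup>2"
proof -
  have "k*(1-d)*\<sigma>\<^sup>2 > 0" using assms by simp
  hence v: "v > 0" using assms by linarith
  thus "sqrt v > 0" by simp
  show "k*(1-d)*\<sigma>\<^sup>2 \<le> (sqrt v)\<^sup>2" "(sqrt v)\<^sup>2 \<le> k*(1+d)*\<sigma>\<^sup>2" using v assms by auto
qed

lemma perS:
  fixes Q :: "(real \<times> real) measure" and C T \<beta> h \<theta> d :: real and n :: nat and S :: "nat set"
  assumes adm: "admissible C Q" and C: "C > 0" and S: "S \<subseteq> {..<2*n}" "card S = n" and n: "n \<ge> 2"
    and T: "T > 0" and h: "h = \<beta>/2 * sqrt T" "0 < h" "2*h \<le> T"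
    and \<theta>: "\<theta> > 0" and d: "d = 2*\<theta>+\<theta>\<^sup>2" "d\<^sup>2 \<le> 3/5"
  shows "(\<integral>\<^sup>+y. ennreal (case two_stage_alloc T \<beta> (hat_sd1 (S,y)) (hat_sd0 n (S,y)) of (t1, t0) \<Rightarrow>
             proxy_mse (sd Q fst) (sd Q snd) t1 t0) \<partial>PiM {..<2*n} (\<lambda>_. Q))
     \<le> ennreal ((sd Q fst + sd Q snd)\<^sup>2/T * (1 + max (d\<^sup>2/2) (h/(T-h))) +
               (sd Q fst + sd Q snd)\<^sup>2/T * (T/h) * (4*exp(-(real n*\<theta>\<^sup>2/(2*C^4))) + 4*exp(-(real n*\<theta>\<^sup>2/(2*C\<^sup>2)))))"
proof -
  define M where "M = PiM {..<2*n} (\<lambda>_. Q)"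
  define \<sigma>1 where "\<sigma>1 = sd Q fst"
  define \<sigma>0 where "\<sigma>0 = sd Q snd"
  define G where "G = (\<lambda>y. case two_stage_alloc T \<beta> (hat_sd1 (S,y)) (hat_sd0 n (S,y)) of (t1, t0) \<Rightarrow>
             proxy_mse \<sigma>1 \<sigma>0 t1 t0)"
  define A where "A = (\<sigma>1+\<sigma>0)\<^sup>2/T * (1 + max (d\<^sup>2/2) (h/(T-h)))"
  define B where "B = (\<sigma>1+\<sigma>0)\<^sup>2/T * (T/h)"
  define pb where "pb = 2*exp(-(real n*\<theta>\<^sup>2/(2*C^4))) + 2*exp(-(real n*\<theta>\<^sup>2/(2*C\<^sup>2)))"
  have Q: "prob_space Q" and sQ: "sets Q = sets borel" and s1: "\<sigma>1 > 0" and s0: "\<sigma>0 > 0"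
    and AE: "AE x in Q. \<bar>fst x\<bar> \<le> C * sd Q fst \<and> \<bar>snd x\<bar> \<le> C * sd Q snd"
    using adm by (auto simp: admissible_def \<sigma>1_def \<sigma>0_def)
  have AE1: "AE x in Q. \<bar>fst x\<bar> \<le> C * sd Q fst" using AE by eventually_elim auto
  have AE0: "AE x in Q. \<bar>snd x\<bar> \<le> C * sd Q snd" using AE by eventually_elim auto
  interpret P: prob_space M unfolding M_def using Q by (intro prob_space_PiM) auto
  have S0: "{..<2*n} - S \<subseteq> {..<2*n}" "card ({..<2*n} - S) = n"
    using S by (auto simp: card_Diff_subset finite_subset)
  obtain E1 where E1: "E1 \<in> sets M" "measure M E1 \<le> pb"
    and g1: "\<forall>y \<in> space M - E1. real n/(real n - 1)*(1-d)*\<sigma>1\<^sup>2 \<le> sample_var S (\<lambda>t. fst (y t)) \<and>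
        sample_var S (\<lambda>t. fst (y t)) \<le> real n/(real n - 1)*(1+d)*\<sigma>1\<^sup>2"
    using arm[OF Q fst_meas(1)[OF sQ] _ AE1 C _ S n \<theta>] s1 unfolding M_def \<sigma>1_def pb_def d(1) by auto
  obtain E0 where E0: "E0 \<in> sets M" "measure M E0 \<le> pb"
    and g0: "\<forall>y \<in> space M - E0. real n/(real n - 1)*(1-d)*\<sigma>0\<^sup>2 \<le> sample_var ({..<2*n} - S) (\<lambda>t. snd (y t)) \<and>
        sample_var ({..<2*n} - S) (\<lambda>t. snd (y t)) \<le> real n/(real n - 1)*(1+d)*\<sigma>0\<^sup>2"
    using arm[OF Q fst_meas(2)[OF sQ] _ AE0 C _ S0 n \<theta>] s0 unfolding M_def \<sigma>0_def pb_def d(1) by auto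
  define E where "E = E1 \<union> E0"
  have E: "E \<in> sets M" using E1 E0 by (auto simp: E_def)
  have mE: "measure M E \<le> 2*pb" using measure_Un_le[OF E1(1) E0(1)] E1 E0 by (simp add: E_def)
  have k: "real n/(real n - 1) > 0" using n by simp
  have d1: "d < 1" using d(2) abs_square_less_1[of d] by auto
  have d0: "0 \<le> d" using d(1) \<theta> by simp
  have A0: "A \<ge> 0" unfolding A_def using T h d0 by (intro mult_nonneg_nonneg add_nonneg_nonneg) (auto simp: max_def)
  have Gb: "G y \<le> A + B * indicator E y" if y: "y \<in> space M" for y
  proof (cases "y \<in> E")
    case True
    have "G y \<le> B" unfolding G_def B_def by (rule alloc_always(1)[OF T h s1 s0])
    thus ?thesis using True A0 by simp
  next
    case False
    have y1: "y \<in> space M - E1" "y \<in> space M - E0" using y False by (auto simp: E_def)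
    note gg1 = good_sq[OF g1[rule_format, OF y1(1), THEN conjunct1] g1[rule_format, OF y1(1), THEN conjunct2] k d1 s1]
    note gg0 = good_sq[OF g0[rule_format, OF y1(2), THEN conjunct1] g0[rule_format, OF y1(2), THEN conjunct2] k d1 s0]
    have "G y \<le> A" unfolding G_def A_def hat_sd1_def hat_sd0_def fst_conv snd_conv
      by (rule alloc_good[OF T h s1 s0 gg1(1) gg0(1) k d0 d(2) gg1(2,3) gg0(2,3)])
    thus ?thesis using False by simp
  qed
  have G0: "G y \<ge> 0" for y unfolding G_def by (rule alloc_always(2)[OF T h s1 s0])
  have B0: "B \<ge> 0" unfolding B_def using T h by simp
  have "(\<integral>\<^sup>+y. ennreal (G y) \<partial>M) \<le> (\<integral>\<^sup>+y. (ennreal A + ennreal B * indicator E y) \<partial>M)"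
  proof (rule nn_integral_mono)
    fix y assume "y \<in> space M"
    hence "ennreal (G y) \<le> ennreal (A + B * indicator E y)" using Gb by (intro ennreal_leI) auto
    also have "\<dots> = ennreal A + ennreal B * indicator E y" using A0 B0
      by (simp add: ennreal_plus ennreal_mult' ennreal_indicator indicator_def)
    finally show "ennreal (G y) \<le> ennreal A + ennreal B * indicator E y" .
  qed
  also have "\<dots> = ennreal A + ennreal B * emeasure M E"
    using E by (simp add: nn_integral_add nn_integral_cmult_indicator P.emeasure_space_1)
  also have "emeasure M E = ennreal (measure M E)" by (simp add: P.emeasure_eq_measure)
  also have "ennreal A + ennreal B * ennreal (measure M E) \<le> ennreal A + ennreal B * ennreal (2*pb)"
    using mE by (intro add_left_mono mult_left_mono ennreal_leI) auto
  also have "\<dots> = ennreal (A + B*(2*pb))"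
  proof -
    have pb0: "pb \<ge> 0" by (simp add: pb_def)
    have "ennreal (A + B*(2*pb)) = ennreal A + ennreal B * ennreal (2*pb)"
      using A0 B0 pb0 by (simp add: ennreal_plus ennreal_mult)
    thus ?thesis by simp
  qed
  finally show ?thesis unfolding G_def A_def B_def pb_def M_def \<sigma>1_def \<sigma>0_def by (simp add: algebra_simps)
qed

lemma expV_bound:
  fixes Q :: "(real \<times> real) measure" and C T \<beta> h \<theta> d :: real and n :: nat
  assumes adm: "admissible C Q" and C: "C > 0" and n: "n \<ge> 2"
    and T: "T > 0" and h: "h = \<beta>/2 * sqrt T" "0 < h" "2*h \<le> T"
    and \<theta>: "\<theta> > 0" and d: "d = 2*\<theta>+\<theta>\<^sup>2" "d\<^sup>2 \<le> 3/5"
  shows "expected_V T \<beta> n Q \<le> (sd Q fst + sd Q snd)\<^sup>2/T * (1 + max (d\<^sup>2/2) (h/(T-h))) +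
               (sd Q fst + sd Q snd)\<^sup>2/T * (T/h) * (4*exp(-(real n*\<theta>\<^sup>2/(2*C^4))) + 4*exp(-(real n*\<theta>\<^sup>2/(2*C\<^sup>2))))"
    (is "_ \<le> ?Bd")
proof -
  define SS where "SS = {S. S \<subseteq> {..<2*n} \<and> card S = n}"
  define P where "P = measure_pmf (pmf_of_set SS)"
  define M where "M = PiM {..<2*n} (\<lambda>_. Q)"
  define F where "F = (\<lambda>\<omega>. case two_stage_alloc T \<beta> (hat_sd1 \<omega>) (hat_sd0 n \<omega>) of (t1, t0) \<Rightarrow>
              proxy_mse (sd Q fst) (sd Q snd) t1 t0)"
  have Q: "prob_space Q" and s1: "sd Q fst > 0" and s0: "sd Q snd > 0" using adm by (auto simp: admissible_def)
  interpret PM: prob_space M unfolding M_def using Q by (intro prob_space_PiM) auto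
  have SSf: "finite SS" unfolding SS_def by (rule finite_subset[of _ "Pow {..<2*n}"]) auto
  have SSne: "SS \<noteq> {}" proof - have "{..<n} \<in> SS" unfolding SS_def by auto thus ?thesis by auto qed
  have eV: "expected_V T \<beta> n Q = (\<integral>\<omega>. F \<omega> \<partial>(P \<Otimes>\<^sub>M M))"
    unfolding expected_V_def stage1_space_def F_def P_def M_def SS_def by simp
  have Bd0: "?Bd \<ge> 0"
  proof -
    have "0 \<le> d\<^sup>2/2" by simp
    hence "0 \<le> max (d\<^sup>2/2) (h/(T-h))" by (rule max.coboundedI1)
    thus ?thesis using T h(2,3) by (intro add_nonneg_nonneg mult_nonneg_nonneg) auto
  qed
  have F0: "F \<omega> \<ge> 0" for \<omega> unfolding F_def by (rule alloc_always(2)[OF T h s1 s0])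
  show ?thesis
  proof (cases "integrable (P \<Otimes>\<^sub>M M) F")
    case False
    thus ?thesis using eV Bd0 by (simp add: not_integrable_integral_eq)
  next
    case True
    have Fm[measurable]: "F \<in> borel_measurable (P \<Otimes>\<^sub>M M)" using True by (rule borel_measurable_integrable)
    have eV2: "expected_V T \<beta> n Q = enn2real (\<integral>\<^sup>+\<omega>. ennreal (F \<omega>) \<partial>(P \<Otimes>\<^sub>M M))"
      unfolding eV using F0 by (intro integral_eq_nn_integral) auto
    have "(\<integral>\<^sup>+\<omega>. ennreal (F \<omega>) \<partial>(P \<Otimes>\<^sub>M M)) = (\<integral>\<^sup>+S. \<integral>\<^sup>+y. ennreal (F (S,y)) \<partial>M \<partial>P)"
      by (rule PM.nn_integral_fst[symmetric]) measurable
    also have "\<dots> \<le> (\<integral>\<^sup>+S. ennreal ?Bd \<partial>P)"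
    proof (rule nn_integral_mono_AE)
      show "AE S in P. (\<integral>\<^sup>+y. ennreal (F (S,y)) \<partial>M) \<le> ennreal ?Bd"
        unfolding P_def AE_measure_pmf_iff set_pmf_of_set[OF SSne SSf]
      proof
        fix S assume "S \<in> SS"
        hence S: "S \<subseteq> {..<2*n}" "card S = n" by (auto simp: SS_def)
        show "(\<integral>\<^sup>+y. ennreal (F (S,y)) \<partial>M) \<le> ennreal ?Bd"
          unfolding F_def M_def by (rule perS[OF adm C S n T h \<theta> d])
      qed
    qed
    also have "\<dots> = ennreal ?Bd" unfolding P_def nn_integral_const measure_pmf.emeasure_space_1 by (rule mult_1_right)
    finally have X: "(\<integral>\<^sup>+\<omega>. ennreal (F \<omega>) \<partial>(P \<Otimes>\<^sub>M M)) \<le> ennreal ?Bd" .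
    show ?thesis unfolding eV2 by (rule enn2real_leI[OF Bd0 X])
  qed
qed

lemma C_ge_1:
  assumes adm: "admissible C Q" and C: "C > 0"
  shows "C \<ge> 1"
proof -
  have Q: "prob_space Q" and sQ: "sets Q = sets borel" and s1: "sd Q fst > 0"
    and AE: "AE x in Q. \<bar>fst x\<bar> \<le> C * sd Q fst \<and> \<bar>snd x\<bar> \<le> C * sd Q snd"
    using adm by (auto simp: admissible_def)
  have AE1: "AE x in Q. \<bar>fst x\<bar> \<le> C * sd Q fst" using AE by eventually_elim auto
  note mom = moments[OF Q fst_meas(1)[OF sQ] AE1]
  have "0 \<le> (\<integral>x. (fst x - (\<integral>y. fst y \<partial>Q))\<^sup>2 \<partial>Q)" by (rule integral_nonneg_AE) auto
  hence "(sd Q fst)\<^sup>2 = (\<integral>x. (fst x - (\<integral>y. fst y \<partial>Q))\<^sup>2 \<partial>Q)" unfolding sd_def by simp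
  also have "\<dots> \<le> (\<integral>x. (fst x)\<^sup>2 \<partial>Q)" using mom(3) by simp
  also have "\<dots> \<le> (C * sd Q fst)\<^sup>2" by (rule mom(5))
  finally have "1 * (sd Q fst)\<^sup>2 \<le> C\<^sup>2 * (sd Q fst)\<^sup>2" by (simp add: power_mult_distrib)
  hence "1 \<le> C\<^sup>2" using s1 by (subst (asm) mult_le_cancel_right_pos) auto
  show ?thesis
  proof (rule ccontr)
    assume "\<not> 1 \<le> C"
    hence "C*C < 1*1" using C by (intro mult_strict_mono) auto
    thus False using \<open>1 \<le> C\<^sup>2\<close> by (simp add: power2_eq_square)
  qed
qed

lemma final_num:
  fixes C T L \<kappa> \<theta> h d :: real
  assumes C: "C \<ge> 1" and L: "L = ln T" "L \<ge> 2" and T: "T > 0"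
    and \<kappa>: "\<kappa> = C\<^sup>2 * sqrt L / sqrt T" and N: "C^4 * L \<le> T/128"
    and h: "h = 2 * C\<^sup>2 * sqrt L * sqrt T" and \<theta>: "\<theta> = sqrt \<kappa>" and d: "d = 2*\<theta>+\<theta>\<^sup>2"
  shows "h \<ge> 2" "2*h \<le> T" "\<theta> > 0" "d\<^sup>2 \<le> 3/5"
    "1 + max (d\<^sup>2/2) (h/(T-h)) + (T/h)*(4*exp(-(h*\<theta>\<^sup>2/(2*C^4))) + 4*exp(-(h*\<theta>\<^sup>2/(2*C\<^sup>2)))) < 1 + 5*\<kappa>"
proof -
  define sT where "sT = sqrt T"
  define sL where "sL = sqrt L"
  have sT: "sT > 0" "sT\<^sup>2 = T" using T by (auto simp: sT_def)
  have sL: "sL > 0" "sL\<^sup>2 = L" using L by (auto simp: sL_def)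
  have C2: "C\<^sup>2 \<ge> 1" using C by (simp add: one_le_power)
  have C4: "C^4 \<ge> 1" using C by (simp add: one_le_power)
  have T1: "T \<ge> 1"
  proof (rule ccontr)
    assume "\<not> T \<ge> 1" hence "ln T < 0" using T by simp
    thus False using L by simp
  qed
  have sT1: "sT \<ge> 1" using T1 by (simp add: sT_def)
  have sL1: "sL \<ge> 1" using L by (simp add: sL_def)
  have \<kappa>pos: "\<kappa> > 0" using \<kappa> C sT sL by (simp add: sT_def sL_def)
  have \<kappa>2: "\<kappa>\<^sup>2 = C^4 * L / T"
    unfolding \<kappa> sT_def[symmetric] sL_def[symmetric] using sT sL
    by (simp add: power_divide power_mult_distrib flip: power_mult)
  have \<kappa>2b: "\<kappa>\<^sup>2 \<le> 1/128" unfolding \<kappa>2 using N T by (simp add: field_simps)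
  have \<theta>2: "\<theta>\<^sup>2 = \<kappa>" using \<kappa>pos by (simp add: \<theta>)
  show \<theta>pos: "\<theta> > 0" using \<kappa>pos by (simp add: \<theta>)
  have "\<theta>^4 \<le> (3/10)^4"
  proof -
    have "\<theta>^4 = \<kappa>\<^sup>2" using \<theta>2 by (metis power2_eq_square power4_eq_xxxx mult.assoc)
    moreover have "(3/10::real)^4 = 81/10000" by (simp add: power4_eq_xxxx)
    ultimately show ?thesis using \<kappa>2b by simp
  qed
  hence \<theta>b: "\<theta> \<le> 3/10" using power_le_imp_le_base[of \<theta> 3 "3/10"] by (simp add: numeral_eq_Suc)
  have \<kappa>b: "\<kappa> \<le> 9/100"
  proof -
    have "\<theta>\<^sup>2 \<le> (3/10)\<^sup>2" using \<theta>b \<theta>pos by (intro power_mono) auto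
    thus ?thesis using \<theta>2 by (simp add: power2_eq_square)
  qed
  have hT: "h/T = 2*\<kappa>"
    unfolding h \<kappa> sT_def[symmetric] sL_def[symmetric] sT(2)[symmetric] using sT(1) by (simp add: field_simps power2_eq_square)
  have hpos: "h > 0" using h C sT sL by (simp add: sT_def sL_def)
  have h\<kappa>: "h*\<kappa> = 2*C^4*L"
    unfolding h \<kappa> sT_def[symmetric] sL_def[symmetric] using sT sL
    by (simp add: field_simps power2_eq_square power4_eq_xxxx)
  show "h \<ge> 2"
  proof -
    have "2*1*1*1 \<le> 2 * C\<^sup>2 * sL * sT" using C2 sL1 sT1 by (intro mult_mono) auto
    thus ?thesis by (simp add: h sL_def sT_def)
  qed
  show "2*h \<le> T" using hT \<kappa>b T by (simp add: field_simps)
  have e1: "h*\<theta>\<^sup>2/(2*C^4) = L" using h\<kappa> \<theta>2 C4 C by (simp add: field_simps)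
  have e2: "h*\<theta>\<^sup>2/(2*C\<^sup>2) = C\<^sup>2 * L" using h\<kappa> \<theta>2 C2
    by (simp add: field_simps power2_eq_square power4_eq_xxxx)
  have expL: "exp (-L) = 1/T" using T L by (simp add: exp_minus inverse_eq_divide)
  have "exp (-(C\<^sup>2*L)) \<le> exp (-L)" using C2 L by (simp add: mult_le_cancel_right1 order_trans[OF _ mult_right_mono[OF C2]])
  hence P: "(T/h)*(4*exp(-(h*\<theta>\<^sup>2/(2*C^4))) + 4*exp(-(h*\<theta>\<^sup>2/(2*C\<^sup>2)))) \<le> 8/h"
  proof -
    assume a: "exp (-(C\<^sup>2*L)) \<le> exp (-L)"
    have "(T/h)*(4*exp(-(h*\<theta>\<^sup>2/(2*C^4))) + 4*exp(-(h*\<theta>\<^sup>2/(2*C\<^sup>2)))) \<le> (T/h)*(8/T)"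
      unfolding e1 e2 using a expL hpos T by (intro mult_left_mono) auto
    thus ?thesis using T by simp
  qed
  have P2: "8/h \<le> 2*\<kappa>"
  proof -
    have "1*2 \<le> C^4*L" using C4 L(2) by (intro mult_mono) auto
    hence "8 \<le> 4*C^4*L" by linarith
    also have "\<dots> = 2*\<kappa>*h" using h\<kappa> by (simp add: algebra_simps)
    finally show ?thesis using hpos by (simp add: field_simps)
  qed
  have dd: "d\<^sup>2 = \<kappa>*(2+\<theta>)\<^sup>2" unfolding d using \<theta>2 by (simp add: power2_eq_square algebra_simps)
  have d23: "(2+\<theta>)\<^sup>2 \<le> (23/10)\<^sup>2" using \<theta>b \<theta>pos by (intro power_mono) auto
  have dkb: "d\<^sup>2 \<le> \<kappa>*(529/100)" unfolding dd using d23 \<kappa>pos by (intro mult_left_mono) (auto simp: power2_eq_square)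
  show "d\<^sup>2 \<le> 3/5" using dkb \<kappa>b by linarith
  have M1: "d\<^sup>2/2 \<le> 27/10*\<kappa>" using dkb \<kappa>pos by linarith
  have M2: "h/(T-h) \<le> 27/10*\<kappa>"
  proof -
    have "h/(T-h) = (h/T)/(1 - h/T)" using T hpos \<open>2*h \<le> T\<close> by (simp add: field_simps)
    also have "\<dots> = 2*\<kappa>/(1-2*\<kappa>)" by (simp add: hT)
    also have "\<dots> \<le> 27/10*\<kappa>" using \<kappa>pos \<kappa>b by (simp add: field_simps)
    finally show ?thesis .
  qed
  have "max (d\<^sup>2/2) (h/(T-h)) \<le> 27/10*\<kappa>" using M1 M2 by simp
  thus "1 + max (d\<^sup>2/2) (h/(T-h)) + (T/h)*(4*exp(-(h*\<theta>\<^sup>2/(2*C^4))) + 4*exp(-(h*\<theta>\<^sup>2/(2*C\<^sup>2)))) < 1 + 5*\<kappa>"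
    using P P2 \<kappa>pos by linarith
qed

theorem corollary1:
  fixes C T \<beta> :: real and n :: nat
  assumes "0 < C"
    and "T \<ge> 320 powr (5/4) * C ^ 5"
    and "\<beta> = 4 * C\<^sup>2 * sqrt (ln T)"
    and "real n = \<beta> / 2 * sqrt T"
  shows "\<beta> * sqrt T \<le> T \<and>
    (SUP Q \<in> {Q. admissible C Q}.
       ereal (expected_V T \<beta> n Q / ((sd Q fst + sd Q snd)\<^sup>2 / T)))
      < ereal (1 + 5 * C\<^sup>2 * T powr (-1/2) * sqrt (ln T))"
proof -
  note C = assms(1) and Tb = assms(2) and \<beta> = assms(3) and nh = assms(4)
  have p: "320 powr (5/4) > (0::real)" by simp
  have T: "T > 0" using Tb p C by (smt (verit) mult_pos_pos zero_less_power)
  have L0: "ln T \<ge> 0"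
  proof (rule ccontr)
    assume "\<not> ln T \<ge> 0"
    hence "sqrt (ln T) < 0" by simp
    hence "\<beta> < 0" using C by (simp add: \<beta> mult_pos_neg)
    hence "\<beta> / 2 * sqrt T < 0" using T by (simp add: mult_neg_pos)
    thus False using nh by (metis of_nat_0_le_iff not_less)
  qed
  have N: "C^4 * ln T \<le> T/128" by (rule num_main[OF C Tb L0])
  have feas: "\<beta> * sqrt T \<le> T"
  proof -
    have nn: "0 \<le> \<beta> * sqrt T" using L0 T by (simp add: \<beta>)
    have "(\<beta> * sqrt T)\<^sup>2 = 4\<^sup>2 * (C\<^sup>2)\<^sup>2 * (sqrt (ln T))\<^sup>2 * (sqrt T)\<^sup>2"
      by (simp add: \<beta> power_mult_distrib)
    also have "\<dots> = 16 * (C^4 * ln T) * T" using L0 T by (simp add: power4_eq_xxxx power2_eq_square)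
    also have "\<dots> \<le> 16 * (T/128) * T"
    proof -
      have "16 * (C^4 * ln T) \<le> 16 * (T/128)" using N by simp
      thus ?thesis using T by (intro mult_right_mono) auto
    qed
    also have "\<dots> \<le> T\<^sup>2" using T by (simp add: power2_eq_square)
    finally show ?thesis by (rule power2_le_imp_le) (use T in auto)
  qed
  define \<kappa> where "\<kappa> = C\<^sup>2 * sqrt (ln T) / sqrt T"
  have tgt: "1 + 5 * C\<^sup>2 * T powr (-1/2) * sqrt (ln T) = 1 + 5*\<kappa>"
  proof -
    have "T powr (-1/2) = T powr (-(1/2))" by simp
    also have "\<dots> = inverse (T powr (1/2))" by (rule powr_minus)
    also have "\<dots> = inverse (sqrt T)" using T by (simp add: powr_half_sqrt)
    finally have e: "T powr (-1/2) = inverse (sqrt T)" .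
    show ?thesis unfolding e \<kappa>_def by (simp add: divide_inverse ac_simps)
  qed
  have SUP: "(SUP Q \<in> {Q. admissible C Q}. ereal (expected_V T \<beta> n Q / ((sd Q fst + sd Q snd)\<^sup>2 / T)))
      < ereal (1 + 5*\<kappa>)"
  proof (cases "{Q. admissible C Q} = {}")
    case True
    thus ?thesis by (simp add: bot_ereal_def)
  next
    case False
    then obtain Q0 where "admissible C Q0" by auto
    hence C1: "C \<ge> 1" using C_ge_1 C by blast
    have "320 powr (1::real) \<le> 320 powr (5/4)" by (intro powr_mono) auto
    hence "320 \<le> 320 powr (5/4::real)" by simp
    moreover have "1 \<le> C^5" using C1 by (simp add: one_le_power)
    ultimately have "320 * 1 \<le> 320 powr (5/4) * C^5" by (intro mult_mono) auto
    hence T320: "T \<ge> 320" using Tb by simp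
    have L2: "ln T \<ge> 2"
    proof -
      have "exp (2::real) = exp 1 * exp 1" by (simp flip: exp_add)
      also have "\<dots> \<le> 3 * 3" using exp_le by (intro mult_mono) auto
      finally have "exp 2 \<le> T" using T320 by simp
      hence "ln (exp 2) \<le> ln T" using T by (subst ln_le_cancel_iff) auto
      thus ?thesis by simp
    qed
    define h where "h = 2 * C\<^sup>2 * sqrt (ln T) * sqrt T"
    define \<theta> where "\<theta> = sqrt \<kappa>"
    define d where "d = 2*\<theta>+\<theta>\<^sup>2"
    note fn = final_num[OF C1 refl L2 T \<kappa>_def N h_def \<theta>_def d_def]
    have hb: "h = \<beta>/2 * sqrt T" by (simp add: h_def \<beta>)
    have nh': "real n = h" using nh hb by simp
    have n2: "n \<ge> 2" using fn(1) nh' by linarith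
    define Bf where "Bf = 1 + max (d\<^sup>2/2) (h/(T-h)) + (T/h)*(4*exp(-(h*\<theta>\<^sup>2/(2*C^4))) + 4*exp(-(h*\<theta>\<^sup>2/(2*C\<^sup>2))))"
    have hpos: "h > 0" using fn(1) by simp
    have "(SUP Q \<in> {Q. admissible C Q}. ereal (expected_V T \<beta> n Q / ((sd Q fst + sd Q snd)\<^sup>2 / T))) \<le> ereal Bf"
    proof (rule SUP_least)
      fix Q assume "Q \<in> {Q. admissible C Q}"
      hence adm: "admissible C Q" by simp
      have s: "sd Q fst > 0" "sd Q snd > 0" using adm by (auto simp: admissible_def)
      define V where "V = (sd Q fst + sd Q snd)\<^sup>2 / T"
      have V: "V > 0" using s T by (simp add: V_def)
      have "expected_V T \<beta> n Q \<le> V * (1 + max (d\<^sup>2/2) (h/(T-h))) +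
               V * (T/h) * (4*exp(-(real n*\<theta>\<^sup>2/(2*C^4))) + 4*exp(-(real n*\<theta>\<^sup>2/(2*C\<^sup>2))))"
        unfolding V_def by (rule expV_bound[OF adm C n2 T hb hpos fn(2) fn(3) d_def fn(4)])
      also have "\<dots> = V * Bf" unfolding Bf_def nh' by (simp add: algebra_simps)
      finally have "expected_V T \<beta> n Q / V \<le> Bf" using V by (simp add: field_simps)
      thus "ereal (expected_V T \<beta> n Q / ((sd Q fst + sd Q snd)\<^sup>2 / T)) \<le> ereal Bf" by (simp add: V_def)
    qed
    also have "ereal Bf < ereal (1 + 5*\<kappa>)" using fn(5) by (simp add: Bf_def)
    finally show ?thesis .
  qed
  show ?thesis unfolding tgt using feas SUP by blast
qed


end
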